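(* For every $n$ there exist $n$ weighted sites in the Euclidean plane whose weighted order-$3$ Voronoi diagram has $\Omega(n^2)$ non-empty regions.
   Context: Site $s_i\in\mathbb R^2$ has weight $w_i>0$ and $\omega_i=w_i^{1/2}$; the weighted distance from $p$ to $s_i$ is $\|s_i-p\|_2/\omega_i$ (multiplicatively weighted). For $A\subseteq S$ with $|A|=3$, the order-$3$ Voronoi region of $A$ is the set of points $p$ for which there exists $r$ with $\|s_i-p\|_2\le\omega_i r$ for all $s_i\in A$ and $\|s_i-p\|_2>\omega_i r$ for all $s_i\notin A$. *)

theory Defs
  imports "HOL-Analysis.Analysis"
begin

text \<open>Sites are indexed by a finite index set I; site i is at s i in the Euclidean plane
  (real^2) with weight w i > 0, and omega_i = sqrt (w i). The weighted distance from p to s i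
  is dist (s i) p / sqrt (w i).\<close>

definition order_k_region ::
  "nat set \<Rightarrow> (nat \<Rightarrow> real^2) \<Rightarrow> (nat \<Rightarrow> real) \<Rightarrow> nat set \<Rightarrow> (real^2) set" where
  "order_k_region I s w A =
     {p. \<exists>r::real. (\<forall>i\<in>A. dist (s i) p \<le> sqrt (w i) * r) \<and>
                    (\<forall>i\<in>I - A. dist (s i) p > sqrt (w i) * r)}"

definition num_nonempty_order3_regions ::
  "nat set \<Rightarrow> (nat \<Rightarrow> real^2) \<Rightarrow> (nat \<Rightarrow> real) \<Rightarrow> nat" where
  "num_nonempty_order3_regions I s w =
     card {A. A \<subseteq> I \<and> card A = 3 \<and> order_k_region I s w A \<noteq> {}}"

end

theory Submission
  imports Defs
begin

lemma dist2: "dist (vector[a,b]::real^2) (vector[c,d]) ^ 2 = (a-c)^2 + (b-d)^2"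
  by (simp add: dist_vec_def L2_set_def sum_2 dist_real_def)

lemma sq_le: assumes "d \<ge> 0" "w > 0" "Q \<ge> 0"
  shows "(d \<le> sqrt w * sqrt Q) \<longleftrightarrow> d^2 / w \<le> Q"
proof -
  have "sqrt w * sqrt Q = sqrt (w*Q)" by (simp add: real_sqrt_mult)
  moreover have "d = sqrt (d^2)" using assms by simp
  ultimately have "(d \<le> sqrt w * sqrt Q) \<longleftrightarrow> d^2 \<le> w*Q"
    by (metis real_sqrt_le_iff)
  also have "\<dots> \<longleftrightarrow> d^2/w \<le> Q" using assms by (simp add: divide_le_eq mult.commute)
  finally show ?thesis .
qed

lemma sq_gt: assumes "d \<ge> 0" "w > 0" "Q \<ge> 0"
  shows "(d > sqrt w * sqrt Q) \<longleftrightarrow> d^2 / w > Q"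
  using sq_le[OF assms] by linarith

lemma keyB:
  fixes K L X e :: real
  assumes "K \<ge> 0" "L \<ge> 0" "\<bar>K - L\<bar> \<ge> 1" "(K*e)^2 \<le> 1/4" "8*X^2*(K+L) \<le> 1" "e > 0"
  shows "(2*L*e*X)^2 + (2*L*e*(-K*e) + (1 + (L*e)^2))^2 > (2*K*e*X)^2 + (2*K*e*(-K*e) + (1 + (K*e)^2))^2"
proof -
  have eq: "(2*L*e*X)^2 + (2*L*e*(-K*e) + (1 + (L*e)^2))^2 - ((2*K*e*X)^2 + (2*K*e*(-K*e) + (1 + (K*e)^2))^2)
     = e^2 * (4*X^2*(L^2-K^2) + (L-K)^2*(2 - 2*(K*e)^2 + (L-K)^2*e^2))"
    by (simp add: algebra_simps power2_eq_square)
  have pos: "4*X^2*(L^2-K^2) + (L-K)^2*(2 - 2*(K*e)^2 + (L-K)^2*e^2) > 0"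
  proof (cases "L > K")
    case True
    have h1: "(L-K)^2 \<ge> 1" using assms(3) True by (simp add: abs_if)
    have "(L-K)^2*e^2 \<ge> 0" by simp
    then have h2: "2 - 2*(K*e)^2 + (L-K)^2*e^2 \<ge> 3/2" using assms(4) by linarith
    have h3: "4*X^2*(L^2-K^2) \<ge> 0" using True assms(1) by (simp add: power_mono)
    have "(L-K)^2*(2 - 2*(K*e)^2 + (L-K)^2*e^2) \<ge> 1 * (3/2)"
      using h1 h2 by (intro mult_mono) auto
    then show ?thesis using h3 by linarith
  next
    case False
    then have KL: "K - L \<ge> 1" using assms(3) by linarith
    have "4*X^2*(K^2-L^2) = (4*X^2*(K+L))*(K-L)" by (simp add: algebra_simps power2_eq_square)
    also have "\<dots> \<le> (1/2)*(K-L)" using assms(5) KL by (intro mult_right_mono) auto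
    finally have a: "4*X^2*(K^2-L^2) \<le> (1/2)*(K-L)" .
    have b: "(K-L) \<le> (K-L)^2" using KL by (simp add: power2_eq_square)
    have "(L-K)^2*e^2 \<ge> 0" by simp
    then have c: "2 - 2*(K*e)^2 + (L-K)^2*e^2 \<ge> 3/2" using assms(4) by linarith
    have "(L-K)^2*(2 - 2*(K*e)^2 + (L-K)^2*e^2) \<ge> (L-K)^2*(3/2)" using c by (intro mult_left_mono) auto
    moreover have "(L-K)^2 = (K-L)^2" by (simp add: power2_commute)
    moreover have "4*X^2*(L^2-K^2) = - (4*X^2*(K^2-L^2))" by (simp add: algebra_simps)
    ultimately have d: "(K-L)^2*(3/2) \<le> (L-K)^2*(2 - 2*(K*e)^2 + (L-K)^2*e^2)" by simp
    have f: "4*X^2*(L^2-K^2) \<ge> -(1/2)*(K-L)" using a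
      by (simp only: mult.assoc[symmetric] right_diff_distrib)
    have g0: "\<And>t::real. 1 \<le> t \<Longrightarrow> t \<le> t^2 \<Longrightarrow> t^2*(3/2) > (1/2)*t" by linarith
    have g: "(K-L)^2*(3/2) > (1/2)*(K-L)" using g0[OF KL b] .
    show ?thesis using d f g by linarith
  qed
  have "e^2 * (4*X^2*(L^2-K^2) + (L-K)^2*(2 - 2*(K*e)^2 + (L-K)^2*e^2)) > 0"
    using pos assms(6) by simp
  with eq show ?thesis by linarith
qed
definition "sg (n::nat) = 1/(4*(real n)^2)"
definition "dl (n::nat) = 1/(16*(real n)^3)"
definition "mm (n::nat) = (n-1) div 2"
definition "bt n (k::nat) = 2 * real k * dl n"
definition "al n (k::nat) = 1 + (real k * dl n)^2"
definition site :: "nat \<Rightarrow> nat \<Rightarrow> real^2" where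
  "site n i = (if i = 0 then vector[0,1] else if i \<le> mm n then vector[0, - al n i / bt n i]
     else vector[real i * sg n, 0])"
definition wt :: "nat \<Rightarrow> nat \<Rightarrow> real" where
  "wt n i = (if i = 0 then 64 else if i \<le> mm n then 1/(bt n i)^2 else (sg n)^2/4)"

lemma params:
  assumes "n \<ge> 4" "k \<le> n"
  shows "dl n > 0" "sg n > 0" "real k * dl n \<le> 1/16" "dl n = sg n / (4 * real n)"
    "real k * sg n \<le> 1/(4*real n)"
proof -
  have N: "real n \<ge> 4" using assms by simp
  have K: "real k \<le> real n" using assms by simp
  show "dl n > 0" "sg n > 0" using N by (auto simp: dl_def sg_def)
  show "dl n = sg n / (4 * real n)" using N by (simp add: dl_def sg_def power3_eq_cube power2_eq_square)
  have "real k * dl n \<le> real n * dl n" using K by (intro mult_right_mono) (auto simp: dl_def)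
  also have "\<dots> = 1/(16 * (real n)^2)" using N by (simp add: dl_def power3_eq_cube power2_eq_square)
  also have "\<dots> \<le> 1/16" using N by (simp add: field_simps)
  finally show "real k * dl n \<le> 1/16" .
  have "real k * sg n \<le> real n * sg n" using K by (intro mult_right_mono) (auto simp: sg_def)
  also have "\<dots> = 1/(4*real n)" using N by (simp add: sg_def power2_eq_square)
  finally show "real k * sg n \<le> 1/(4*real n)" .
qed

lemma wt_pos: "n \<ge> 4 \<Longrightarrow> wt n j > 0"
  using params(1,2)[of n 0] by (auto simp: wt_def bt_def)

lemma val:
  assumes "n \<ge> 4"
  shows "dist (site n j) (vector[x,y]) ^2 / wt n j =
    (if j = 0 then (x^2 + (1-y)^2)/64 else if j \<le> mm n then (bt n j * x)^2 + (bt n j * y + al n j)^2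
     else ((real j * sg n - x)^2 + y^2) * 4 / (sg n)^2)"
proof -
  have e: "dl n > 0" "sg n > 0" using params(1,2)[of n 0] assms by auto
  show ?thesis
  proof (cases "j = 0")
    case True then show ?thesis by (simp add: site_def wt_def dist2 power2_commute)
  next
    case False
    show ?thesis
    proof (cases "j \<le> mm n")
      case True
      have b: "bt n j > 0" using False e by (simp add: bt_def)
      have "dist (site n j) (vector[x,y]) ^2 / wt n j = ((0-x)^2 + (- al n j / bt n j - y)^2) * (bt n j)^2"
        using False True by (simp add: site_def wt_def dist2)
      also have "\<dots> = (bt n j * x)^2 + (bt n j * y + al n j)^2"
        using b by (simp add: field_simps power2_eq_square)
      finally show ?thesis using False True by simp
    next
      case F2: False
      show ?thesis using False F2 e by (simp add: site_def wt_def dist2 field_simps)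
    qed
  qed
qed

lemma region_nonempty:
  assumes n4: "n \<ge> 4" and k: "1 \<le> k" "k \<le> mm n" and i: "mm n < i" "i < n"
  shows "order_k_region {..<n} (site n) (wt n) {0,k,i} \<noteq> {}"
proof -
  define e where "e = dl n"
  define s where "s = sg n"
  define N where "N = real n"
  define K where "K = real k"
  define X where "X = real i * s"
  define Y where "Y = - K * e"
  define Q where "Q = (bt n k * X)^2 + (bt n k * Y + al n k)^2"
  have mmn: "mm n < n" using n4 by (simp add: mm_def)
  have kn: "k \<le> n" "i \<le> n" using k i mmn by auto
  have e0: "e > 0" and s0: "s > 0" using params[OF n4, of 0] by (auto simp: e_def s_def)
  have N4: "N \<ge> 4" using n4 by (simp add: N_def)
  have Ke: "K * e \<le> 1/16" using params(3)[OF n4 kn(1)] by (simp add: K_def e_def)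
  have Ke0: "K * e \<ge> 0" using e0 by (simp add: K_def)
  have es: "e = s / (4*N)" using params(4)[OF n4 kn(1)] by (simp add: e_def s_def N_def)
  have X1: "X \<le> 1/(4*N)" using params(5)[OF n4 kn(2)] by (simp add: X_def s_def N_def)
  have X0: "X \<ge> 0" using s0 by (simp add: X_def)
  have "1/(4*N) \<le> 1/16" using N4 by (simp add: field_simps)
  then have X16: "X \<le> 1/16" using X1 by linarith
  have Qf: "Q = (2*K*e*X)^2 + (2*K*e*(-K*e) + (1 + (K*e)^2))^2"
    by (simp add: Q_def bt_def al_def K_def e_def Y_def)
  have "(K*e)^2 \<le> (1/16)^2" using Ke Ke0 by (rule power_mono)
  then have Kesq: "(K*e)^2 \<le> 1/256" by (simp add: power2_eq_square)
  have Q1: "Q \<ge> 1/4"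
  proof -
    have "2*K*e*(-K*e) + (1 + (K*e)^2) = 1 - (K*e)^2" by (simp add: power2_eq_square)
    moreover have "1 - (K*e)^2 \<ge> 1/2" using Kesq by simp
    ultimately have "(2*K*e*(-K*e) + (1 + (K*e)^2))^2 \<ge> (1/2)^2" by (metis power_mono zero_le_divide_1_iff zero_le_numeral)
    then have "1/4 \<le> (2*K*e*(-K*e) + (1 + (K*e)^2))^2" by (simp add: power2_eq_square)
    then show ?thesis unfolding Qf by (rule add_increasing[OF zero_le_power2])
  qed
  have Q2: "Q \<le> 2"
  proof -
    have "2*K*e*X \<le> 1" using Ke X16 Ke0 X0 mult_mono[of "K*e" "1/16" X "1/16"] by simp
    moreover have "2*K*e*X \<ge> 0" using Ke0 X0 by simp
    ultimately have a: "(2*K*e*X)^2 \<le> 1" by (simp add: power_le_one)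
    have eq: "2*K*e*(-K*e) + (1 + (K*e)^2) = 1 - (K*e)^2" by (simp add: power2_eq_square)
    have "1 - (K*e)^2 \<le> 1" "1 - (K*e)^2 \<ge> 0" using Kesq by simp_all
    then have "(1 - (K*e)^2)^2 \<le> 1" by (intro power_le_one)
    then have "(2*K*e*(-K*e) + (1 + (K*e)^2))^2 \<le> 1" unfolding eq .
    with a show ?thesis unfolding Qf by linarith
  qed
  define p where "p = (vector[X, Y] :: real^2)"
  have V: "\<And>j. dist (site n j) p ^2 / wt n j =
    (if j = 0 then (X^2 + (1-Y)^2)/64 else if j \<le> mm n then (bt n j * X)^2 + (bt n j * Y + al n j)^2
     else ((real j * s - X)^2 + Y^2) * 4 / s^2)"
    unfolding p_def s_def by (rule val[OF n4])
  have le: "\<And>j. dist (site n j) p \<le> sqrt (wt n j) * sqrt Q \<longleftrightarrow> dist (site n j) p ^2 / wt n j \<le> Q"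
    using Q1 by (intro sq_le wt_pos n4) auto
  have gt: "\<And>j. dist (site n j) p > sqrt (wt n j) * sqrt Q \<longleftrightarrow> dist (site n j) p ^2 / wt n j > Q"
    using Q1 by (intro sq_gt wt_pos n4) auto
  have in0: "dist (site n 0) p ^2 / wt n 0 \<le> Q"
  proof -
    have "X^2 \<le> 1" using X16 X0 by (simp add: power_le_one)
    moreover have "(1-Y)^2 \<le> 2^2" using Ke Ke0 unfolding Y_def
      by (intro power_mono) auto
    ultimately have "(X^2 + (1-Y)^2)/64 \<le> 1/4" by simp
    then show ?thesis using V[of 0] Q1 by simp
  qed
  have ink: "dist (site n k) p ^2 / wt n k \<le> Q" using V[of k] k by (simp add: Q_def)
  have ini: "dist (site n i) p ^2 / wt n i \<le> Q"
  proof -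
    have "K*e = (K * s)/(4*N)" by (simp add: es)
    also have "\<dots> \<le> N * s/(4*N)" using kn s0 N4 by (intro divide_right_mono mult_right_mono) (auto simp: K_def N_def)
    also have "\<dots> = s/4" using N4 by simp
    finally have "K*e \<le> s/4" .
    then have "(K*e)^2 \<le> (s/4)^2" using Ke0 by (simp add: power_mono)
    then have "Y^2 * 4 / s^2 \<le> 1/4" using s0 by (simp add: Y_def field_simps power2_eq_square)
    then show ?thesis using V[of i] i Q1 by (simp add: X_def)
  qed
  have outA: "dist (site n j) p ^2 / wt n j > Q" if "mm n < j" "j \<noteq> i" for j
  proof -
    have "\<bar>real j - real i\<bar> \<ge> 1" using that by (cases "j < i") auto
    then have "(real j - real i)^2 \<ge> 1" using abs_le_square_iff[of 1 "real j - real i"] by simp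
    moreover have "(real j * s - X)^2 = (real j - real i)^2 * s^2" unfolding X_def
      by (simp add: power_mult_distrib[symmetric] left_diff_distrib)
    ultimately have "(real j * s - X)^2 \<ge> 1 * s^2" by (metis mult_right_mono zero_le_power2)
    then have "(real j * s - X)^2 + Y^2 \<ge> s^2" by (simp add: add_increasing2)
    then have "((real j * s - X)^2 + Y^2) * 4 / s^2 \<ge> 4" using s0 by (simp add: field_simps)
    then show ?thesis using V[of j] that Q2 by auto
  qed
  have outB: "dist (site n l) p ^2 / wt n l > Q" if "1 \<le> l" "l \<le> mm n" "l \<noteq> k" for l
  proof -
    define L where "L = real l"
    have ln: "l \<le> n" using that mmn by auto
    have d: "\<bar>K - L\<bar> \<ge> 1" using that unfolding K_def L_def by (cases "l < k") auto
    have KL: "K + L \<le> 2*N" using kn ln by (simp add: K_def L_def N_def)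
    have "X^2 \<le> (1/(4*N))^2" using X0 X1 by (simp add: power_mono)
    then have "8*X^2*(K+L) \<le> 8*(1/(4*N))^2*(2*N)" using KL X0 by (intro mult_mono) (auto simp: K_def L_def)
    also have "\<dots> = 1/N" using N4 by (simp add: field_simps power2_eq_square)
    also have "\<dots> \<le> 1" using N4 by simp
    finally have c: "8*X^2*(K+L) \<le> 1" .
    have "(K*e)^2 \<le> 1/4" using Kesq by simp
    from keyB[OF _ _ d this c e0] have "(2*L*e*X)^2 + (2*L*e*(-K*e) + (1 + (L*e)^2))^2 > Q"
      unfolding Qf by (simp add: K_def L_def)
    then show ?thesis using V[of l] that by (simp add: bt_def al_def L_def e_def Y_def)
  qed
  have "p \<in> order_k_region {..<n} (site n) (wt n) {0,k,i}"
    unfolding order_k_region_def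
  proof (intro CollectI exI[of _ "sqrt Q"] conjI ballI)
    fix j assume "j \<in> {0,k,i}"
    then show "dist (site n j) p \<le> sqrt (wt n j) * sqrt Q" using le in0 ink ini by auto
  next
    fix j assume j: "j \<in> {..<n} - {0,k,i}"
    show "dist (site n j) p > sqrt (wt n j) * sqrt Q"
    proof (cases "j \<le> mm n")
      case True then show ?thesis using j gt outB[of j] by auto
    next
      case False then show ?thesis using j gt outA[of j] by auto
    qed
  qed
  then show ?thesis by auto
qed

lemma site_inj:
  assumes n4: "n \<ge> 4"
  shows "inj_on (site n) {..<n}"
proof (rule inj_onI)
  fix i j assume i: "i \<in> {..<n}" and j: "j \<in> {..<n}" and eq: "site n i = site n j"
  have e0: "dl n > 0" and s0: "sg n > 0" using params[OF n4, of 0] by auto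
  have neg: "- al n k / bt n k < 0" if "k \<ge> 1" for k
  proof -
    have "al n k > 0" by (simp add: al_def add_pos_nonneg)
    moreover have "bt n k > 0" using that e0 by (simp add: bt_def)
    ultimately show ?thesis by simp
  qed
  have c2: "site n k $ 2 = (if k = 0 then 1 else if k \<le> mm n then - al n k / bt n k else 0)" for k
    by (simp add: site_def)
  have c1: "site n k $ 1 = (if k = 0 then 0 else if k \<le> mm n then 0 else real k * sg n)" for k
    by (simp add: site_def)
  have e2: "site n i $ 2 = site n j $ 2" and e1: "site n i $ 1 = site n j $ 1" using eq by auto
  show "i = j"
  proof (cases "i = 0 \<or> j = 0")
    case True
    then show ?thesis using e2 neg[of i] neg[of j] unfolding c2 by (auto split: if_splits)
  next
    case False
    then have i1: "i \<ge> 1" and j1: "j \<ge> 1" by auto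
    show ?thesis
    proof (cases "i \<le> mm n \<and> j \<le> mm n")
      case True
      define a where "a = real i * dl n"
      define b where "b = real j * dl n"
      have a0: "a > 0" "b > 0" using i1 j1 e0 by (auto simp: a_def b_def)
      have "i \<le> n" "j \<le> n" using i j by auto
      then have a1: "a \<le> 1/16" "b \<le> 1/16" using params(3)[OF n4] by (auto simp: a_def b_def)
      have "al n i / bt n i = al n j / bt n j" using e2 True i1 j1 unfolding c2 by auto
      then have "(1 + a^2) / (2*a) = (1 + b^2) / (2*b)"
        by (simp add: al_def bt_def a_def b_def mult.assoc)
      then have "(1 + a^2) * b = (1 + b^2) * a" using a0 by (simp add: field_simps)
      then have "(b - a) * (1 - a*b) = 0" by (simp add: algebra_simps power2_eq_square)
      moreover have "a*b \<le> 1/16 * (1/16)" using a0 a1 by (intro mult_mono) auto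
      ultimately have "a = b" by auto
      then show ?thesis using e0 by (simp add: a_def b_def)
    next
      case F2: False
      then have "\<not> i \<le> mm n \<and> \<not> j \<le> mm n"
        using e2 neg[OF i1] neg[OF j1] False unfolding c2 by (auto split: if_splits)
      then show ?thesis using e1 False s0 unfolding c1 by auto
    qed
  qed
qed

lemma count_bound:
  assumes n4: "n \<ge> 4"
  shows "real (num_nonempty_order3_regions {..<n} (site n) (wt n)) \<ge> 1/16 * (real n)^2"
proof -
  define m where "m = mm n"
  define T where "T = {A. A \<subseteq> {..<n} \<and> card A = 3 \<and> order_k_region {..<n} (site n) (wt n) A \<noteq> {}}"
  define f where "f = (\<lambda>(k::nat,i::nat). {0,k,i})"
  have mn: "m < n" using n4 by (simp add: m_def mm_def)
  have sub: "f ` ({1..m} \<times> {m<..<n}) \<subseteq> T"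
  proof
    fix A assume "A \<in> f ` ({1..m} \<times> {m<..<n})"
    then obtain k i where ki: "1 \<le> k" "k \<le> m" "m < i" "i < n" and A: "A = {0,k,i}"
      by (auto simp: f_def)
    have "card A = 3" using ki A by auto
    moreover have "A \<subseteq> {..<n}" using ki A mn by auto
    moreover have "order_k_region {..<n} (site n) (wt n) A \<noteq> {}"
      using region_nonempty[OF n4, of k i] ki A by (simp add: m_def)
    ultimately show "A \<in> T" by (simp add: T_def)
  qed
  have inj: "inj_on f ({1..m} \<times> {m<..<n})"
  proof (rule inj_onI)
    fix x y assume x: "x \<in> {1..m} \<times> {m<..<n}" and y: "y \<in> {1..m} \<times> {m<..<n}" and "f x = f y"
    then obtain k i k' i' where "x = (k,i)" "y = (k',i')" "{0,k,i} = {0,k',i'}"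
      "1 \<le> k" "k \<le> m" "m < i" "1 \<le> k'" "k' \<le> m" "m < i'"
      by (auto simp: f_def)
    then show "x = y" by (auto simp: insert_eq_iff doubleton_eq_iff)
  qed
  have finT: "finite T" unfolding T_def by (rule finite_subset[of _ "Pow {..<n}"]) auto
  have "card (f ` ({1..m} \<times> {m<..<n})) = m * (n - 1 - m)"
    using card_image[OF inj] by simp
  then have "m * (n - 1 - m) \<le> card T" using card_mono[OF finT sub] by simp
  moreover have "m * m \<le> m * (n - 1 - m)" using n4 by (simp add: m_def mm_def)
  moreover have "n \<le> 4 * m" using n4 by (simp add: m_def mm_def)
  ultimately have a: "m * m \<le> card T" and b: "n * n \<le> (4*m)*(4*m)"
    using mult_le_mono by (linarith, blast)
  then have "n * n \<le> 16 * card T" by linarith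
  then have "real n * real n \<le> 16 * real (card T)" by (metis of_nat_le_iff of_nat_mult of_nat_numeral)
  then show ?thesis by (simp add: num_nonempty_order3_regions_def T_def power2_eq_square)
qed

theorem mainTheorem19:
  shows "\<exists>c::real. c > 0 \<and> (\<exists>N::nat. \<forall>n\<ge>N.
           \<exists>(s :: nat \<Rightarrow> real^2) (w :: nat \<Rightarrow> real).
             inj_on s {..<n} \<and> (\<forall>i<n. w i > 0) \<and>
             real (num_nonempty_order3_regions {..<n} s w) \<ge> c * (real n)^2)"
proof (intro exI[of _ "1/16"] conjI exI[of _ 4] allI impI)
  fix n :: nat assume "4 \<le> n"
  then show "\<exists>(s :: nat \<Rightarrow> real^2) (w :: nat \<Rightarrow> real).
             inj_on s {..<n} \<and> (\<forall>i<n. w i > 0) \<and>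
             real (num_nonempty_order3_regions {..<n} s w) \<ge> 1/16 * (real n)^2"
    using site_inj wt_pos count_bound by blast
qed simp

end
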